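(* Let $P_0>0$, $P_1>0$, $c>0$ be real numbers and let $a_1,b_1,h,g$ be nonzero complex numbers. Define $L'=P_0(|a_1|^2+|h|^2)$, $M'=2P_0|a_1||h|$, $N'=P_1(|b_1|^2+|g|^2)+c$, $P'=2P_1|b_1||g|$, $s=\angle a_1-\angle h$, $t=\angle b_1-\angle g$ (where $\angle z$ denotes the argument of $z$), and consider the function of $x\in\mathbb{R}$ $$\gamma_1(x)=\frac{P_0|a_1e^{jx}+h|^2}{P_1|b_1e^{jx}+g|^2+c}=\frac{L'+M'\cos(s+x)}{N'+P'\cos(t+x)}.$$ Let $C'=(L'P')^2+(M'N')^2-2L'M'N'P'\cos(s-t)$. Then at every stationary point $x^*$ of $\gamma_1$ (i.e. $\gamma_1'(x^* )=0$), the value $\gamma_1^*=\gamma_1(x^* )$ equals one of the two values $$\gamma_1^*=\frac{L'}{N'}-\frac{1}{N'}\,\frac{C'}{P'\bigl(L'P'-M'N'\cos(s-t)\bigr)\pm N'\sqrt{C'-\bigl(M'P'\sin(s-t)\bigr)^2}}.$$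
   Context: This is the SINR of a receiver assisted by a one-element passive reconfigurable surface with phase shift $\theta_1=e^{jx}$, one interferer, reflected signal channel $a_1$, reflected interferer channel $b_1$, direct signal channel $h$, direct interferer channel $g$, noise power $c$, and transmit powers $P_0,P_1$. *)

theory Defs
  imports "HOL-Analysis.Analysis"
begin

definition gamma1 :: "real \<Rightarrow> real \<Rightarrow> real \<Rightarrow> complex \<Rightarrow> complex \<Rightarrow> complex \<Rightarrow> complex \<Rightarrow> real \<Rightarrow> real" where
  "gamma1 P0 P1 c a1 b1 h g x =
     (P0 * (cmod (a1 * cis x + h))\<^sup>2) / (P1 * (cmod (b1 * cis x + g))\<^sup>2 + c)"

end

theory Submission
  imports Defs
begin

lemma cm: "(cmod (a * cis x + h))\<^sup>2 = (cmod a)\<^sup>2 + (cmod h)\<^sup>2 + 2 * cmod a * cmod h * cos (Arg a - Arg h + x)"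
proof -
  have ea: "a = rcis (cmod a) (Arg a)" and eh: "h = rcis (cmod h) (Arg h)" by (simp_all add: rcis_cmod_Arg)
  define r where "r = cmod a" define q where "q = cmod h" define \<alpha> where "\<alpha> = Arg a" define \<beta> where "\<beta> = Arg h"
  have "a * cis x + h = Complex (r * cos (\<alpha>+x) + q * cos \<beta>) (r * sin (\<alpha>+x) + q * sin \<beta>)"
    apply (subst ea, subst eh) by (simp add: r_def q_def \<alpha>_def \<beta>_def complex_eq_iff rcis_def cos_add sin_add algebra_simps)
  hence "(cmod (a * cis x + h))\<^sup>2 = (r * cos (\<alpha>+x) + q * cos \<beta>)\<^sup>2 + (r * sin (\<alpha>+x) + q * sin \<beta>)\<^sup>2"
    by (simp add: cmod_def)
  also have "\<dots> = r^2 * ((sin (\<alpha>+x))\<^sup>2 + (cos (\<alpha>+x))\<^sup>2) + q^2 * ((sin \<beta>)\<^sup>2 + (cos \<beta>)\<^sup>2) + 2*r*q*(cos (\<alpha>+x) * cos \<beta> + sin (\<alpha>+x) * sin \<beta>)"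
    by algebra
  also have "\<dots> = r^2 + q^2 + 2*r*q*cos ((\<alpha> + x) - \<beta>)"
    by (simp only: sin_cos_squared_add cos_diff)
  also have "(\<alpha> + x) - \<beta> = \<alpha> - \<beta> + x" by simp
  finally show ?thesis by (simp add: r_def q_def \<alpha>_def \<beta>_def)
qed

lemma alg:
  fixes L M N P y B C S a :: real
  assumes "a * y^2 - 2 * B * y + C = 0" "S^2 = B^2 - a * C" "S \<ge> 0" "a \<noteq> 0"
    and "C = 0 \<Longrightarrow> B = 0"
  shows "\<exists>\<sigma>::real. (\<sigma> = 1 \<or> \<sigma> = -1) \<and> y = C / (B + \<sigma> * S)"
proof -
  have "(a*y - B)^2 = a*(a * y^2 - 2 * B * y + C) + (B^2 - a*C)" by (simp add: power2_eq_square algebra_simps)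
  hence "(a*y - B)^2 = S^2" using assms(1,2) by simp
  hence "a*y - B = S \<or> a*y - B = -S" by (metis power2_eq_iff)
  then obtain \<tau> where tau: "\<tau> = 1 \<or> \<tau> = -1" "a*y - B = \<tau> * S" by force
  have prod: "y * (B - \<tau> * S) = C"
  proof -
    have "y * (B - \<tau> * S) = y * (2*B - a*y)" using tau(2) by (simp add: algebra_simps)
    also have "\<dots> = C" using assms(1) by (simp add: power2_eq_square algebra_simps)
    finally show ?thesis .
  qed
  show ?thesis
  proof (cases "B - \<tau> * S = 0")
    case False
    hence "y = C / (B + (-\<tau>) * S)" using prod by (simp add: field_simps)
    thus ?thesis using tau(1) by (metis minus_minus)
  next
    case True
    hence C0: "C = 0" using prod by simp
    hence "B = 0" using assms(5) by simp
    hence "S = 0" using True tau(1) by auto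
    hence "a*y = 0" using tau(2) \<open>B = 0\<close> by simp
    hence "y = 0" using assms(4) by simp
    thus ?thesis using C0 by (intro exI[of _ 1]) simp
  qed
qed

theorem theorem1:
  fixes P0 P1 c :: real and a1 b1 h g :: complex and xs :: real
  assumes "P0 > 0" "P1 > 0" "c > 0"
    and "a1 \<noteq> 0" "b1 \<noteq> 0" "h \<noteq> 0" "g \<noteq> 0"
    and "((gamma1 P0 P1 c a1 b1 h g) has_real_derivative 0) (at xs)"
  shows "let L' = P0 * ((cmod a1)\<^sup>2 + (cmod h)\<^sup>2);
             M' = 2 * P0 * cmod a1 * cmod h;
             N' = P1 * ((cmod b1)\<^sup>2 + (cmod g)\<^sup>2) + c;
             P' = 2 * P1 * cmod b1 * cmod g;
             s = Arg a1 - Arg h;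
             t = Arg b1 - Arg g;
             C' = (L' * P')\<^sup>2 + (M' * N')\<^sup>2 - 2 * L' * M' * N' * P' * cos (s - t)
         in \<exists>\<sigma>::real. (\<sigma> = 1 \<or> \<sigma> = -1) \<and>
              gamma1 P0 P1 c a1 b1 h g xs =
                L' / N' - (1 / N') * (C' / (P' * (L' * P' - M' * N' * cos (s - t))
                      + \<sigma> * N' * sqrt (C' - (M' * P' * sin (s - t))\<^sup>2)))"
proof -
  define L where "L = P0 * ((cmod a1)\<^sup>2 + (cmod h)\<^sup>2)"
  define M where "M = 2 * P0 * cmod a1 * cmod h"
  define N where "N = P1 * ((cmod b1)\<^sup>2 + (cmod g)\<^sup>2) + c"
  define P where "P = 2 * P1 * cmod b1 * cmod g"
  define s where "s = Arg a1 - Arg h"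
  define t where "t = Arg b1 - Arg g"
  define C where "C = (L * P)\<^sup>2 + (M * N)\<^sup>2 - 2 * L * M * N * P * cos (s - t)"
  have Pp: "P > 0" using assms by (simp add: P_def)
  have "N - P = P1 * (cmod b1 - cmod g)^2 + c" by (simp add: N_def P_def power2_eq_square algebra_simps)
  hence NP: "N > P" using assms by (smt (verit) mult_nonneg_nonneg zero_le_power2)
  have Dpos: "N + P * cos (t + x) > 0" for x
  proof -
    have "P * cos (t + x) \<ge> P * (-1)" using Pp by (intro mult_left_mono) auto
    thus ?thesis using NP by simp
  qed
  define f where "f = (\<lambda>x. (L + M * cos (s + x)) / (N + P * cos (t + x)))"
  have feq: "gamma1 P0 P1 c a1 b1 h g = f"
  proof
    fix x
    show "gamma1 P0 P1 c a1 b1 h g x = f x"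
      unfolding gamma1_def f_def cm
      by (simp add: L_def M_def N_def P_def s_def t_def algebra_simps)
  qed
  have dn: "((\<lambda>x. L + M * cos (s + x)) has_real_derivative (- M * sin (s + xs))) (at xs)"
    by (auto intro!: derivative_eq_intros)
  have dd: "((\<lambda>x. N + P * cos (t + x)) has_real_derivative (- P * sin (t + xs))) (at xs)"
    by (auto intro!: derivative_eq_intros)
  have df: "(f has_real_derivative
      ((- M * sin (s + xs)) * (N + P * cos (t + xs)) - (L + M * cos (s + xs)) * (- P * sin (t + xs)))
        / ((N + P * cos (t + xs)) * (N + P * cos (t + xs)))) (at xs)"
    unfolding f_def using DERIV_divide[OF dn dd] Dpos[of xs] by simp
  have "((- M * sin (s + xs)) * (N + P * cos (t + xs)) - (L + M * cos (s + xs)) * (- P * sin (t + xs)))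
        / ((N + P * cos (t + xs)) * (N + P * cos (t + xs))) = 0"
    using DERIV_unique[OF df] assms(8) feq by simp
  moreover have "(N + P * cos (t + xs)) * (N + P * cos (t + xs)) \<noteq> 0" using Dpos[of xs] by simp
  ultimately have "(- M * sin (s + xs)) * (N + P * cos (t + xs)) - (L + M * cos (s + xs)) * (- P * sin (t + xs)) = 0"
    by simp
  hence crit: "M * sin (s + xs) * (N + P * cos (t + xs)) = P * sin (t + xs) * (L + M * cos (s + xs))"
    by algebra
  define \<gamma> where "\<gamma> = gamma1 P0 P1 c a1 b1 h g xs"
  define \<theta> where "\<theta> = t + xs"
  define \<delta> where "\<delta> = s - t"
  have sx: "s + xs = \<delta> + \<theta>" by (simp add: \<delta>_def \<theta>_def)
  have gdef: "\<gamma> = (L + M * cos (\<delta> + \<theta>)) / (N + P * cos \<theta>)"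
    using feq by (simp add: \<gamma>_def f_def sx \<theta>_def)
  have E1: "L + M * cos (\<delta> + \<theta>) = \<gamma> * (N + P * cos \<theta>)"
    using gdef Dpos[of xs] by (simp add: \<theta>_def field_simps)
  have "M * sin (\<delta> + \<theta>) * (N + P * cos \<theta>) = \<gamma> * P * sin \<theta> * (N + P * cos \<theta>)"
    using crit E1 by (simp add: sx \<theta>_def[symmetric] algebra_simps)
  hence E2: "M * sin (\<delta> + \<theta>) = \<gamma> * P * sin \<theta>"
    using Dpos[of xs] by (simp add: \<theta>_def)
  define cd where "cd = cos \<delta>" define sd where "sd = sin \<delta>"
  define ct where "ct = cos \<theta>" define st where "st = sin \<theta>"
  have pt: "ct^2 + st^2 = 1" and pd: "cd^2 + sd^2 = 1" by (simp_all add: ct_def st_def cd_def sd_def)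
  have E1': "M * (cd * ct - sd * st) = (\<gamma> * N - L) + \<gamma> * P * ct"
    using E1 by (simp add: cos_add cd_def ct_def sd_def st_def algebra_simps)
  have E2': "M * (sd * ct + cd * st) = \<gamma> * P * st"
    using E2 by (simp add: sin_add cd_def ct_def sd_def st_def algebra_simps)
  have F1: "M * cd = (\<gamma> * N - L) * ct + \<gamma> * P" using E1' E2' pt by algebra
  have F2: "M * sd = - (\<gamma> * N - L) * st" using E1' E2' pt by algebra
  have Q: "M^2 - 2 * \<gamma> * P * M * cd + \<gamma>^2 * P^2 = (\<gamma> * N - L)^2"
    using F1 F2 pt pd by algebra
  define y where "y = L - N * \<gamma>"
  define B where "B = P * (L * P - M * N * cd)"
  define a where "a = P^2 - N^2"
  have Cd: "C = (L * P)\<^sup>2 + (M * N)\<^sup>2 - 2 * L * M * N * P * cd" by (simp add: C_def cd_def \<delta>_def)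
  have quad: "a * y^2 - 2 * B * y + C = 0"
    using Q unfolding a_def y_def B_def Cd by algebra
  define X where "X = C - (M * P * sd)^2"
  have id1: "B^2 - a * C = N^2 * X" unfolding X_def B_def a_def Cd using pd by algebra
  have id2: "B^2 = P^2 * C - P^2 * M^2 * N^2 * sd^2" unfolding B_def Cd using pd by algebra
  have "(a * y - B)^2 = B^2 - a * C" using quad by algebra
  hence "N^2 * X \<ge> 0" using id1 by (metis zero_le_power2)
  hence Xnn: "X \<ge> 0" using NP Pp by (simp add: zero_le_mult_iff)
  define S where "S = N * sqrt X"
  have S2: "S^2 = B^2 - a * C" using id1 Xnn by (simp add: S_def power_mult_distrib)
  have S0: "S \<ge> 0" using NP Pp Xnn by (simp add: S_def)
  have a0: "a \<noteq> 0" using NP Pp by (simp add: a_def power2_eq_square) (smt (verit) mult_strict_mono)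
  have CB: "B = 0" if "C = 0"
  proof -
    have "B^2 \<le> 0" using id2 that by (simp add: zero_le_mult_iff)
    thus ?thesis by simp
  qed
  obtain \<sigma> :: real where sg: "\<sigma> = 1 \<or> \<sigma> = -1" "y = C / (B + \<sigma> * S)"
    using alg[OF quad S2 S0 a0 CB] by blast
  have "\<gamma> = L / N - (1 / N) * y" using NP Pp by (simp add: y_def field_simps)
  hence fin: "\<gamma> = L / N - (1 / N) * (C / (P * (L * P - M * N * cos \<delta>) + \<sigma> * N * sqrt (C - (M * P * sin \<delta>)\<^sup>2)))"
    using sg(2) by (simp add: B_def S_def X_def cd_def sd_def mult.assoc)
  show ?thesis unfolding Let_def
    apply (rule exI[of _ \<sigma>])
    apply (rule conjI[OF sg(1)])
    using fin unfolding \<gamma>_def \<delta>_def C_def L_def M_def N_def P_def s_def t_def by assumption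
qed

end
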